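(* Let $f:\mathbb{N}\to\mathbb{R}$ with $f(1)=1$ be multiplicative (i.e. $f(mn)=f(m)f(n)$ for coprime $m,n$). Assume there exist $A>0$ and $c\in(0,1)$ such that $|f(n)|\leq A c^n$ for all $n\geq2$. Then $$|f^{-1}(n)| \leq \left(\frac{A}{A+1}\right)^{\omega(n)} (A+1)^{\Omega(n)} n^{\frac{3\ln c}{\ln 3}}, \quad n\geq 2.$$
   Context: $f^{-1}$ denotes the Dirichlet inverse of $f$: the arithmetic function with $\sum_{d\mid n} f(n/d) f^{-1}(d)=\varepsilon(n)$ for all $n$, where $\varepsilon(1)=1$ and $\varepsilon(n)=0$ for $n\ge2$. $\omega(n)$ is the number of distinct prime factors of $n$ and $\Omega(n)$ the number of prime factors counted with multiplicity. *)

theory Defs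
  imports "HOL-Analysis.Analysis" "HOL-Computational_Algebra.Primes"
begin

text \<open>Dirichlet inverse of an arithmetic function f with f 1 \<noteq> 0, defined by the
  standard recursion derived from sum over d dvd n of f(n div d) * g(d) = [n = 1].
  The value at 0 is irrelevant (set to 0).\<close>
function dirichlet_inverse :: "(nat \<Rightarrow> real) \<Rightarrow> nat \<Rightarrow> real" where
  "dirichlet_inverse f n =
     (if n = 0 then 0
      else if n = 1 then 1 / f 1
      else - (1 / f 1) * (\<Sum>d \<in> {d. d dvd n \<and> d < n}.
               f (n div d) * dirichlet_inverse f d))"
  by auto
termination
  by (relation "Wellfounded.measure snd") auto

definition omega :: "nat \<Rightarrow> nat" where
  "omega n = card (prime_factors n)"

definition Omega :: "nat \<Rightarrow> nat" where
  "Omega n = size (prime_factorization n)"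

end

theory Submission imports Defs begin

declare dirichlet_inverse.simps[simp del]

lemma g1: "f 1 = 1 \<Longrightarrow> dirichlet_inverse f 1 = 1"
  by (subst dirichlet_inverse.simps) simp

lemma g0: "dirichlet_inverse f 0 = 0"
  by (subst dirichlet_inverse.simps) simp

lemma conv:
  assumes f1: "f 1 = 1" and n: "n > 0"
  shows "(\<Sum>d | d dvd n. f (n div d) * dirichlet_inverse f d) = (if n = 1 then 1 else 0)"
proof (cases "n = 1")
  case True
  then show ?thesis using f1 g1[of f] by simp
next
  case False
  have fin: "finite {d. d dvd n \<and> d < n}" by (rule finite_subset[of _ "{..<n}"]) auto
  have eq: "{d. d dvd n} = insert n {d. d dvd n \<and> d < n}"
    using n by (auto dest: dvd_imp_le)
  have "dirichlet_inverse f n = - (\<Sum>d \<in> {d. d dvd n \<and> d < n}. f (n div d) * dirichlet_inverse f d)"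
    using False n f1 by (subst dirichlet_inverse.simps) simp
  then show ?thesis using False n f1 fin by (simp add: eq)
qed

lemma sum_dvd_coprime:
  fixes m n :: nat
  assumes cop: "coprime m n" and m: "m > 0" and n: "n > 0"
  shows "(\<Sum>d | d dvd m*n. F d) = (\<Sum>a | a dvd m. \<Sum>b | b dvd n. F (a*b))"
proof -
  have finm: "finite {a. a dvd m}" using m by simp
  have finn: "finite {b. b dvd n}" using n by simp
  have inj: "inj_on (\<lambda>(a,b). a*b) ({a. a dvd m} \<times> {b. b dvd n})"
  proof (rule inj_onI, clarsimp)
    fix a b a' b' :: nat
    assume h: "a dvd m" "b dvd n" "a' dvd m" "b' dvd n" "a*b = a'*b'"
    have c1: "coprime a b'" using cop h by (meson coprime_divisors)
    have c2: "coprime a' b" using cop h by (meson coprime_divisors)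
    have "a dvd a'*b'" using h(5) by (metis dvd_triv_left)
    hence "a dvd a'" using c1 by (simp add: coprime_dvd_mult_left_iff)
    moreover have "a' dvd a*b" using h(5) by (metis dvd_triv_left)
    hence "a' dvd a" using c2 by (simp add: coprime_dvd_mult_left_iff)
    ultimately have "a = a'" by (simp add: dvd_antisym)
    moreover have "a > 0" using h m by (metis dvd_0_left_iff gr0I)
    ultimately show "a = a' \<and> b = b'" using h(5) by simp
  qed
  have img: "(\<lambda>(a,b). a*b) ` ({a. a dvd m} \<times> {b. b dvd n}) = {d. d dvd m*n}"
  proof
    show "(\<lambda>(a,b). a*b) ` ({a. a dvd m} \<times> {b. b dvd n}) \<subseteq> {d. d dvd m*n}"
      by (auto intro: mult_dvd_mono)
    show "{d. d dvd m*n} \<subseteq> (\<lambda>(a,b). a*b) ` ({a. a dvd m} \<times> {b. b dvd n})"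
    proof
      fix d assume "d \<in> {d. d dvd m*n}"
      then obtain a b where "d = a*b" "a dvd m" "b dvd n" using division_decomp by blast
      then show "d \<in> (\<lambda>(a,b). a*b) ` ({a. a dvd m} \<times> {b. b dvd n})" by auto
    qed
  qed
  have "(\<Sum>d | d dvd m*n. F d) = sum (F \<circ> (\<lambda>(a,b). a*b)) ({a. a dvd m} \<times> {b. b dvd n})"
    using sum.reindex[OF inj, of F] img by simp
  also have "\<dots> = (\<Sum>a | a dvd m. \<Sum>b | b dvd n. F (a*b))"
    by (subst sum.cartesian_product) (simp add: case_prod_beta comp_def)
  finally show ?thesis .
qed

lemma g_mult:
  assumes f1: "f 1 = 1" and mult: "\<And>m n. coprime m n \<Longrightarrow> f (m * n) = f m * f n"
  shows "coprime m n \<Longrightarrow> dirichlet_inverse f (m*n) = dirichlet_inverse f m * dirichlet_inverse f n"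
proof (induction "m*n" arbitrary: m n rule: less_induct)
  case less
  let ?g = "dirichlet_inverse f"
  show ?case
  proof (cases "m \<le> 1 \<or> n \<le> 1")
    case True
    then consider "m = 0" | "m = 1" | "n = 0" | "n = 1" by linarith
    then show ?thesis using less.prems g0[of f] g1[of f, OF f1] by cases auto
  next
    case False
    hence m: "m > 1" and n: "n > 1" by auto
    have finm: "finite {a. a dvd m}" using m by simp
    have finn: "finite {b. b dvd n}" using n by simp
    have key: "f (m*n div (a*b)) * ?g (a*b) =
        (f (m div a) * ?g a) * (f (n div b) * ?g b) + (if a = m then if b = n then ?g (m*n) - ?g m * ?g n else 0 else 0)"
      if ab: "a dvd m" "b dvd n" for a b
    proof -
      have cab: "coprime a b" using less.prems ab by (meson coprime_divisors)
      have "m div a dvd m" using ab by (metis dvd_div_mult_self dvd_triv_left)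
      moreover have "n div b dvd n" using ab by (metis dvd_div_mult_self dvd_triv_left)
      ultimately have cq: "coprime (m div a) (n div b)" using less.prems by (meson coprime_divisors)
      have d: "m*n div (a*b) = (m div a) * (n div b)" using ab
        by (simp add: div_mult_div_if_dvd)
      have fq: "f (m*n div (a*b)) = f (m div a) * f (n div b)" using d cq mult by simp
      show ?thesis
      proof (cases "a = m \<and> b = n")
        case True
        then show ?thesis using m n f1 fq by simp
      next
        case F: False
        have "a \<le> m" "b \<le> n" using ab m n by (auto dest: dvd_imp_le)
        moreover have "a > 0" "b > 0" using ab m n by (auto intro: gr0I)
        ultimately have "a*b < m*n" using F
        proof (cases "a = m")
          case True
          then show ?thesis using F \<open>b \<le> n\<close> \<open>a > 0\<close> by auto
        next
          case False
          then have "a < m" using \<open>a \<le> m\<close> by simp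
          then show ?thesis using \<open>b \<le> n\<close> \<open>b > 0\<close> by (simp add: mult_less_le_imp_less)
        qed
        hence "?g (a*b) = ?g a * ?g b" using less.hyps cab by blast
        then show ?thesis using F fq by auto
      qed
    qed
    have ifs: "(\<Sum>a | a dvd m. \<Sum>b | b dvd n. if a = m then if b = n then X else 0 else 0) = X" for X :: real
    proof -
      have "(\<Sum>b | b dvd n. if a = m then if b = n then X else 0 else 0) = (if a = m then X else 0)" for a
        by (cases "a = m") (simp_all add: finn sum.delta)
      then show ?thesis by (simp add: finm sum.delta)
    qed
    have "0 = (\<Sum>d | d dvd m*n. f (m*n div d) * ?g d)"
      using conv[of f "m*n", OF f1] m n by simp
    also have "\<dots> = (\<Sum>a | a dvd m. \<Sum>b | b dvd n. f (m*n div (a*b)) * ?g (a*b))"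
      using sum_dvd_coprime[OF less.prems] m n by simp
    also have "\<dots> = (\<Sum>a | a dvd m. \<Sum>b | b dvd n. (f (m div a) * ?g a) * (f (n div b) * ?g b)
         + (if a = m then if b = n then ?g (m*n) - ?g m * ?g n else 0 else 0))"
      by (intro sum.cong refl) (simp add: key)
    also have "\<dots> = (\<Sum>a | a dvd m. f (m div a) * ?g a) * (\<Sum>b | b dvd n. f (n div b) * ?g b)
        + (?g (m*n) - ?g m * ?g n)"
      using finm finn by (simp add: sum.distrib sum_product ifs)
    also have "\<dots> = ?g (m*n) - ?g m * ?g n"
      using conv[of f m, OF f1] conv[of f n, OF f1] m n by simp
    finally show ?thesis by simp
  qed
qed

lemma g_prod:
  assumes f1: "f 1 = 1" and mult: "\<And>m n. coprime m n \<Longrightarrow> f (m * n) = f m * f n"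
  shows "finite S \<Longrightarrow> (\<forall>p\<in>S. prime p) \<Longrightarrow>
    dirichlet_inverse f (\<Prod>p\<in>S. p ^ k p) = (\<Prod>p\<in>S. dirichlet_inverse f (p ^ k p))"
proof (induction S rule: finite_induct)
  case empty
  then show ?case using g1[of f, OF f1] by simp
next
  case (insert x S)
  have "coprime (x ^ k x) (\<Prod>p\<in>S. p ^ k p)"
  proof -
    have "coprime x (p ^ k p)" if "p \<in> S" for p
      using insert that by (metis coprime_power_right_iff insert_iff primes_coprime)
    then have "coprime x (\<Prod>p\<in>S. p ^ k p)" by (simp add: prod_coprime_right)
    then show ?thesis by simp
  qed
  then show ?case using insert g_mult[of f, OF f1 mult] by simp
qed

lemma pow3: "(n::nat) ^ 3 \<le> 3 ^ n"
proof (induction n rule: less_induct)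
  case (less n)
  show ?case
  proof (cases "n \<le> 3")
    case True
    then have "n = 0 \<or> n = 1 \<or> n = 2 \<or> n = 3" by auto
    then show ?thesis by auto
  next
    case False
    then obtain m where m: "n = Suc m" "m \<ge> 3" by (cases n) auto
    have "m ^ 3 \<le> 3 ^ m" using less m by simp
    moreover have "(Suc m) ^ 3 \<le> 3 * m ^ 3"
    proof -
      have "(Suc m) ^ 3 = m^3 + 3*m^2 + 3*m + 1" by (simp add: power3_eq_cube power2_eq_square algebra_simps)
      moreover have "3*m^2 \<le> m^3" using m(2) by (simp add: power3_eq_cube power2_eq_square)
      moreover have "3*m + 1 \<le> m^3" 
      proof -
        have "3*m+1 \<le> 9*m" using m(2) by simp
        also have "\<dots> \<le> m*m*m" using m(2) mult_le_mono1[of 9 "m*m" m] mult_le_mono[of 3 m 3 m] by linarith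
        finally show ?thesis by (simp add: power3_eq_cube)
      qed
      ultimately show ?thesis by simp
    qed
    ultimately show ?thesis using m by simp
  qed
qed

lemma cpow_le_powr:
  fixes c :: real and p k :: nat
  assumes c0: "0 < c" and c1: "c < 1" and p: "p \<ge> 2"
  shows "c ^ (k * p) \<le> real (p ^ k) powr (3 * ln c / ln 3)"
proof -
  have "real (p^3) \<le> real (3^p)" using pow3[of p] by linarith
  hence "ln (real p ^ 3) \<le> ln (3 ^ p)" using p by simp
  hence h: "3 * ln (real p) \<le> p * ln 3" using p by (simp add: ln_realpow)
  have lc: "ln c < 0" using c0 c1 by simp
  have l3: "ln (3::real) > 0" by simp
  have "k * p * ln c \<le> k * (3 * ln (real p) / ln 3) * ln c"
  proof -
    have "3 * ln (real p) / ln 3 \<le> p" using h l3 by (simp add: divide_le_eq)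
    hence "real k * (3 * ln (real p) / ln 3) \<le> real k * real p" by (intro mult_left_mono) auto
    from mult_right_mono_neg[OF this, of "ln c"] lc show ?thesis by simp
  qed
  also have "\<dots> = ln (real (p ^ k)) * (3 * ln c / ln 3)"
    using p by (simp add: ln_realpow)
  finally have "ln (c ^ (k*p)) \<le> ln (real (p ^ k)) * (3 * ln c / ln 3)"
    using c0 by (simp add: ln_realpow)
  hence "exp (ln (c ^ (k*p))) \<le> exp (ln (real (p ^ k)) * (3 * ln c / ln 3))" by simp
  thus ?thesis using c0 p by (simp add: powr_def mult.commute)
qed

lemma pp_rec:
  assumes f1: "f 1 = 1" and p: "prime p" and k: "k > 0"
  shows "dirichlet_inverse f (p^k) = - (\<Sum>j<k. f (p^(k-j)) * dirichlet_inverse f (p^j))"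
proof -
  have p1: "p > 1" using p prime_gt_1_nat by blast
  have set: "{d. d dvd p^k \<and> d < p^k} = (\<lambda>j. p^j) ` {..<k}"
  proof
    show "{d. d dvd p^k \<and> d < p^k} \<subseteq> (\<lambda>j. p^j) ` {..<k}"
    proof clarify
      fix d assume "d dvd p^k" "d < p^k"
      then obtain i where "i \<le> k" "d = p^i" using divides_primepow_nat[OF p] by blast
      moreover have "i \<noteq> k" using \<open>d < p^k\<close> \<open>d = p^i\<close> by auto
      ultimately show "d \<in> (\<lambda>j. p^j) ` {..<k}" by auto
    qed
    show "(\<lambda>j. p^j) ` {..<k} \<subseteq> {d. d dvd p^k \<and> d < p^k}"
      using p1 by (auto intro: le_imp_power_dvd power_strict_increasing)
  qed
  have inj: "inj_on (\<lambda>j. p^j) {..<k}" using p1 by (auto intro: inj_onI simp: power_inject_exp)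
  have "dirichlet_inverse f (p^k) = - (\<Sum>d \<in> {d. d dvd p^k \<and> d < p^k}. f (p^k div d) * dirichlet_inverse f d)"
    using f1 p1 k by (subst dirichlet_inverse.simps) simp
  also have "\<dots> = - (\<Sum>j<k. f (p^k div p^j) * dirichlet_inverse f (p^j))"
    by (simp add: set sum.reindex[OF inj])
  also have "\<dots> = - (\<Sum>j<k. f (p^(k-j)) * dirichlet_inverse f (p^j))"
    using p1 by (intro arg_cong[where f=uminus] sum.cong refl) (simp add: power_diff)
  finally show ?thesis .
qed

lemma mul_le_pow: "(2::nat) \<le> p \<Longrightarrow> i > 0 \<Longrightarrow> p * i \<le> p ^ i"
proof (induction i)
  case 0 then show ?case by simp
next
  case (Suc i)
  show ?case
  proof (cases "i = 0")
    case True then show ?thesis by simp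
  next
    case False
    then have "p * i \<le> p ^ i" using Suc by simp
    moreover have "p \<le> p ^ i" using False Suc.prems by (simp add: self_le_power)
    ultimately have "p * Suc i \<le> 2 * p ^ i" by simp
    also have "\<dots> \<le> p * p ^ i" using Suc.prems by simp
    finally show ?thesis by simp
  qed
qed

definition BB :: "real \<Rightarrow> nat \<Rightarrow> real" where
  "BB A k = (if k = 0 then 1 else A * (A+1)^(k-1))"

lemma BB_sum: "k > 0 \<Longrightarrow> (\<Sum>j<k. A * BB A j) = BB A k"
proof (induction k)
  case 0 then show ?case by simp
next
  case (Suc k)
  show ?case
  proof (cases "k = 0")
    case True then show ?thesis by (simp add: BB_def)
  next
    case False
    then have "(\<Sum>j<Suc k. A * BB A j) = BB A k + A * BB A k" using Suc by simp
    also have "\<dots> = BB A (Suc k)" using False by (cases k) (simp_all add: BB_def algebra_simps)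
    finally show ?thesis .
  qed
qed

lemma BB_nonneg: "A > 0 \<Longrightarrow> BB A k \<ge> 0" by (simp add: BB_def)

lemma pp_bound:
  assumes f1: "f 1 = 1" and A: "A > 0" and c0: "0 < c" and c1: "c < 1"
    and bound: "\<And>n. n \<ge> 2 \<Longrightarrow> \<bar>f n\<bar> \<le> A * c ^ n"
    and p: "prime p"
  shows "\<bar>dirichlet_inverse f (p^k)\<bar> \<le> BB A k * c ^ (k * p)"
proof (induction k rule: less_induct)
  case (less k)
  have p2: "p \<ge> 2" using p prime_ge_2_nat by blast
  show ?case
  proof (cases "k = 0")
    case True then show ?thesis using g1[of f, OF f1] by (simp add: BB_def)
  next
    case False
    have "\<bar>dirichlet_inverse f (p^k)\<bar> = \<bar>\<Sum>j<k. f (p^(k-j)) * dirichlet_inverse f (p^j)\<bar>"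
      using pp_rec[of f, OF f1 p] False by simp
    also have "\<dots> \<le> (\<Sum>j<k. \<bar>f (p^(k-j))\<bar> * \<bar>dirichlet_inverse f (p^j)\<bar>)"
      by (rule order_trans[OF sum_abs]) (simp add: abs_mult)
    also have "\<dots> \<le> (\<Sum>j<k. (A * c ^ ((k-j)*p)) * (BB A j * c ^ (j * p)))"
    proof (intro sum_mono mult_mono)
      fix j assume j: "j \<in> {..<k}"
      have "\<bar>f (p^(k-j))\<bar> \<le> A * c ^ (p^(k-j))"
      proof (rule bound)
        have "p ^ 1 \<le> p^(k-j)" using j p2 by (intro power_increasing) auto
        then show "2 \<le> p^(k-j)" using p2 by simp
      qed
      also have "\<dots> \<le> A * c ^ ((k-j)*p)"
        using mul_le_pow[OF p2, of "k-j"] j A c0 c1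
        by (intro mult_left_mono power_decreasing) (auto simp: mult.commute)
      finally show "\<bar>f (p^(k-j))\<bar> \<le> A * c ^ ((k-j)*p)" .
      show "\<bar>dirichlet_inverse f (p^j)\<bar> \<le> BB A j * c ^ (j * p)" using less j by simp
      show "0 \<le> A * c ^ ((k-j)*p)" using A c0 by simp
    qed simp_all
    also have "\<dots> = (\<Sum>j<k. A * BB A j) * c ^ (k * p)"
      unfolding sum_distrib_right
    proof (intro sum.cong refl)
      fix j assume "j \<in> {..<k}"
      then have "(k-j)*p + j*p = k*p" by (simp add: add_mult_distrib[symmetric])
      then have "c ^ ((k-j)*p) * c ^ (j*p) = c ^ (k*p)" by (metis power_add)
      then show "A * c ^ ((k-j)*p) * (BB A j * c ^ (j * p)) = A * BB A j * c ^ (k * p)"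
        by (metis mult.assoc mult.left_commute)
    qed
    also have "\<dots> = BB A k * c ^ (k * p)" using BB_sum[of k A] False by simp
    finally show ?thesis .
  qed
qed

theorem proposition3p6:
  fixes f :: "nat \<Rightarrow> real" and A c :: real
  assumes f1: "f 1 = 1"
    and mult: "\<And>m n. coprime m n \<Longrightarrow> f (m * n) = f m * f n"
    and A: "A > 0" and c0: "0 < c" and c1: "c < 1"
    and bound: "\<And>n. n \<ge> 2 \<Longrightarrow> \<bar>f n\<bar> \<le> A * c ^ n"
  shows "\<forall>n::nat. n \<ge> 2 \<longrightarrow>
    \<bar>dirichlet_inverse f n\<bar> \<le> (A / (A + 1)) ^ omega n * (A + 1) ^ Omega n
        * real n powr (3 * ln c / ln 3)"
proof (intro allI impI)
  fix n :: nat assume n2: "n \<ge> 2"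
  define P where "P = prime_factors n"
  define k where "k p = multiplicity p n" for p
  define e where "e = 3 * ln c / ln 3"
  have finP: "finite P" unfolding P_def by simp
  have primes: "\<forall>p\<in>P. prime p" unfolding P_def by auto
  have kpos: "k p > 0" if "p \<in> P" for p
  proof -
    have "count (prime_factorization n) p > 0" using that unfolding P_def by simp
    moreover have "prime p" using that unfolding P_def by auto
    ultimately show ?thesis unfolding k_def by (simp add: count_prime_factorization_prime)
  qed
  have neq: "n = (\<Prod>p\<in>P. p ^ k p)" unfolding P_def k_def using n2 by (intro prime_factorization_nat) simp
  have "\<bar>dirichlet_inverse f n\<bar> = \<bar>\<Prod>p\<in>P. dirichlet_inverse f (p ^ k p)\<bar>"
    using g_prod[of f, OF f1 mult finP primes] neq by metis
  also have "\<dots> = (\<Prod>p\<in>P. \<bar>dirichlet_inverse f (p ^ k p)\<bar>)" by (simp add: abs_prod)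
  also have "\<dots> \<le> (\<Prod>p\<in>P. BB A (k p) * real (p ^ k p) powr e)"
  proof (intro prod_mono conjI)
    fix p assume pP: "p \<in> P"
    have pr: "prime p" using pP primes by blast
    show "0 \<le> \<bar>dirichlet_inverse f (p ^ k p)\<bar>" by simp
    have "\<bar>dirichlet_inverse f (p ^ k p)\<bar> \<le> BB A (k p) * c ^ (k p * p)"
      by (rule pp_bound[OF f1 A c0 c1 bound pr])
    also have "\<dots> \<le> BB A (k p) * real (p ^ k p) powr e"
      unfolding e_def using BB_nonneg[OF A] cpow_le_powr[OF c0 c1, of p "k p"] pr prime_ge_2_nat
      by (intro mult_left_mono) auto
    finally show "\<bar>dirichlet_inverse f (p ^ k p)\<bar> \<le> BB A (k p) * real (p ^ k p) powr e" .
  qed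
  also have "\<dots> = (\<Prod>p\<in>P. A / (A+1) * (A+1) ^ k p * real (p ^ k p) powr e)"
  proof (intro prod.cong refl)
    fix p assume "p \<in> P"
    then have "k p > 0" by (rule kpos)
    then have "BB A (k p) = A / (A+1) * (A+1) ^ k p" using A
      by (cases "k p") (simp_all add: BB_def)
    then show "BB A (k p) * real (p ^ k p) powr e = A / (A+1) * (A+1) ^ k p * real (p ^ k p) powr e"
      by simp
  qed
  also have "\<dots> = (A / (A+1)) ^ card P * (A+1) ^ (\<Sum>p\<in>P. k p) * (\<Prod>p\<in>P. real (p ^ k p)) powr e"
    by (simp only: prod.distrib power_sum prod_powr_distrib prod_constant)
  also have "(\<Prod>p\<in>P. real (p ^ k p)) = real n"
    using neq by (metis of_nat_prod)
  also have "card P = omega n" unfolding P_def omega_def by simp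
  also have "(\<Sum>p\<in>P. k p) = Omega n"
  proof -
    have "Omega n = (\<Sum>p\<in>P. count (prime_factorization n) p)"
      unfolding Omega_def P_def by (rule size_multiset_overloaded_eq)
    also have "\<dots> = (\<Sum>p\<in>P. k p)" unfolding k_def
      using primes by (intro sum.cong refl) (simp add: count_prime_factorization_prime)
    finally show ?thesis by simp
  qed
  finally show "\<bar>dirichlet_inverse f n\<bar> \<le> (A / (A + 1)) ^ omega n * (A + 1) ^ Omega n
        * real n powr (3 * ln c / ln 3)" unfolding e_def .
qed

end
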